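(* Let $c\geq 3$ be an integer. Then, as formal power series in $q$, $$\bar F_{c-1}(q)=\varphi(q)\prod_{i\geq 1}\varphi\big(q^{2^i}\big)^{c\cdot 2^{i-1}}.$$
   Context: For an integer $k\geq 1$ let $f_k:=\prod_{n\geq 1}(1-q^{kn})$. For an integer $c\geq1$, $\bar a_c(n)$ is defined by $\sum_{n\geq 0}\bar a_c(n)q^n=\dfrac{f_4^{c-1}}{f_1^2f_2^{2c-3}}$, and $\bar F_c(q):=\sum_{n\geq0}\bar a_c(n)q^n$. Ramanujan's $\varphi$-function is $\varphi(q):=\sum_{k=-\infty}^{\infty}q^{k^2}$. *)

theory Defs
  imports "HOL-Analysis.Analysis" "HOL-Computational_Algebra.Formal_Power_Series"
begin

text \<open>Formal power series in q over the reals; infinite products are taken in the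
  q-adic (fps metric) topology via the library's prodinf.\<close>

definition f_fps :: "nat \<Rightarrow> real fps" where
  "f_fps k = (\<Prod>n. 1 - fps_X ^ (k * Suc n))"

text \<open>bar F_c = f_4^(c-1) / (f_1^2 f_2^(2c-3)), for c >= 2 (so exponents are natural numbers)\<close>
definition barF :: "nat \<Rightarrow> real fps" where
  "barF c = f_fps 4 ^ (c - 1) * inverse (f_fps 1 ^ 2 * f_fps 2 ^ (2 * c - 3))"

text \<open>Ramanujan's phi(q) = sum_{k in Z} q^(k^2): coefficient of q^n is #{k in Z. k^2 = n}\<close>
definition phi_fps :: "real fps" where
  "phi_fps = Abs_fps (\<lambda>n. real (card {k::int. k ^ 2 = int n}))"

end

theory Submission
  imports Defs
begin

definition eqm :: "nat \<Rightarrow> real fps \<Rightarrow> real fps \<Rightarrow> bool" where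
  "eqm m A B \<longleftrightarrow> (\<forall>k<m. fps_nth A k = fps_nth B k)"

lemma eqm_refl[simp]: "eqm m A A" by (simp add: eqm_def)
lemma eqm_sym: "eqm m A B \<Longrightarrow> eqm m B A" by (simp add: eqm_def)
lemma eqm_trans: "eqm m A B \<Longrightarrow> eqm m B C \<Longrightarrow> eqm m A C" by (simp add: eqm_def)
lemma eqm_mono: "eqm m A B \<Longrightarrow> m' \<le> m \<Longrightarrow> eqm m' A B" by (simp add: eqm_def)

lemma eqm_add: "eqm m A B \<Longrightarrow> eqm m C D \<Longrightarrow> eqm m (A + C) (B + D)"
  by (simp add: eqm_def)
lemma eqm_diff: "eqm m A B \<Longrightarrow> eqm m C D \<Longrightarrow> eqm m (A - C) (B - D)"
  by (simp add: eqm_def)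

lemma eqm_mult: assumes "eqm m A B" "eqm m C D" shows "eqm m (A * C) (B * D)"
  unfolding eqm_def
proof (intro allI impI)
  fix k assume k: "k < m"
  have "fps_nth (A * C) k = (\<Sum>i=0..k. fps_nth A i * fps_nth C (k-i))" by (simp add: fps_mult_nth)
  also have "\<dots> = (\<Sum>i=0..k. fps_nth B i * fps_nth D (k-i))"
    using assms k by (intro sum.cong) (auto simp: eqm_def)
  also have "\<dots> = fps_nth (B * D) k" by (simp add: fps_mult_nth)
  finally show "fps_nth (A * C) k = fps_nth (B * D) k" .
qed

lemma eqm_power: "eqm m A B \<Longrightarrow> eqm m (A ^ n) (B ^ n)"
  by (induction n) (auto intro: eqm_mult)

lemma eqm_prod: "(\<And>i. i \<in> S \<Longrightarrow> eqm m (f i) (g i)) \<Longrightarrow> eqm m (prod f S) (prod g S)"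
  by (induction S rule: infinite_finite_induct) (auto intro: eqm_mult)

lemma eqm_compose: assumes "eqm m A B" shows "eqm m (A oo C) (B oo C)"
  unfolding eqm_def
proof (intro allI impI)
  fix k assume k: "k < m"
  show "fps_nth (A oo C) k = fps_nth (B oo C) k"
    unfolding fps_compose_nth using assms k by (intro sum.cong) (auto simp: eqm_def)
qed

lemma eqm_cancel: assumes "eqm m (A * U) (B * U)" "fps_nth U 0 \<noteq> 0" shows "eqm m A B"
proof -
  have "eqm m (A * U * inverse U) (B * U * inverse U)" using assms(1) by (rule eqm_mult) simp
  thus ?thesis using inverse_mult_eq_1'[OF assms(2)] by (simp add: mult.assoc)
qed

lemma eqm_inverse: assumes "eqm m A B" "fps_nth A 0 \<noteq> 0" shows "eqm m (inverse A) (inverse B)"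
proof (cases "m = 0")
  case True thus ?thesis by (simp add: eqm_def)
next
  case False
  hence B0: "fps_nth B 0 \<noteq> 0" using assms by (auto simp: eqm_def)
  have "eqm m (inverse A * B * inverse B) (inverse A * A * inverse B)"
    by (intro eqm_mult eqm_refl) (rule eqm_sym[OF assms(1)])
  thus ?thesis using inverse_mult_eq_1[OF assms(2)] inverse_mult_eq_1'[OF B0]
    by (simp add: mult.assoc)
qed

lemma eqm_eq: "(\<And>m. eqm m A B) \<Longrightarrow> A = B"
  by (auto simp: eqm_def fps_eq_iff)

lemma eqm_prod_one:
  assumes "\<And>i. i \<in> S \<Longrightarrow> eqm m (f i) 1" shows "eqm m (prod f S) 1"
  using eqm_prod[of S m f "\<lambda>_. 1"] assms by simp

lemma prodinf_eqm_aux: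
  fixes g :: "nat \<Rightarrow> real fps"
  assumes g: "\<And>i. eqm (Suc i) (g i) 1"
  shows "n \<ge> k \<Longrightarrow> eqm (Suc k) (\<Prod>i\<le>n. g i) (\<Prod>i<k. g i)"
proof (induction n)
  case 0
  thus ?case using g[of 0] by simp
next
  case (Suc n)
  show ?case
  proof (cases "Suc n = k")
    case True
    have "eqm (Suc k) ((\<Prod>i<k. g i) * g k) ((\<Prod>i<k. g i) * 1)"
      by (intro eqm_mult eqm_refl g)
    thus ?thesis using True by (simp add: lessThan_Suc_atMost[symmetric])
  next
    case False
    hence "n \<ge> k" using Suc by simp
    hence "eqm (Suc k) ((\<Prod>i\<le>n. g i) * g (Suc n)) ((\<Prod>i<k. g i) * 1)"
      using Suc by (intro eqm_mult eqm_mono[OF g]) auto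
    thus ?thesis by simp
  qed
qed

lemma prodinf_eqm:
  fixes g :: "nat \<Rightarrow> real fps"
  assumes g: "\<And>i. eqm (Suc i) (g i) 1"
  shows "eqm (Suc n) (prodinf g) (\<Prod>i<n. g i)" "fps_nth (prodinf g) 0 = 1"
proof -
  define L where "L = Abs_fps (\<lambda>k. fps_nth (\<Prod>i<k. g i) k)"
  have A: "fps_nth (\<Prod>i\<le>n. g i) k = fps_nth L k" if "n \<ge> k" for n k
    using prodinf_eqm_aux[OF g that] by (simp add: eqm_def L_def)
  have L0: "fps_nth L 0 = 1" by (simp add: L_def)
  have lim: "(\<lambda>n. \<Prod>i\<le>n. g i) \<longlonglongrightarrow> L"
  proof (rule tendsto_fpsI)
    fix k show "eventually (\<lambda>n. fps_nth (\<Prod>i\<le>n. g i) k = fps_nth L k) sequentially"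
      unfolding eventually_sequentially using A by blast
  qed
  have "g has_prod L"
    unfolding has_prod_def raw_has_prod_def using lim L0 by auto
  hence PL: "prodinf g = L" by (rule has_prod_unique[symmetric])
  show "fps_nth (prodinf g) 0 = 1" using PL L0 by simp
  show "eqm (Suc n) (prodinf g) (\<Prod>i<n. g i)"
    unfolding PL eqm_def
  proof (intro allI impI)
    fix k assume "k < Suc n"
    hence "eqm (Suc k) (\<Prod>i\<le>n. g i) (\<Prod>i<k. g i)" "eqm (Suc k) (\<Prod>i\<le>n. g i) (\<Prod>i<n. g i)"
      using prodinf_eqm_aux[OF g, of k n] eqm_mono[OF prodinf_eqm_aux[OF g, of n n], of "Suc k"] by auto
    thus "fps_nth L k = fps_nth (\<Prod>i<n. g i) k" using A[of k k] by (auto simp: eqm_def L_def)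
  qed
qed


fun qb :: "'a::comm_ring_1 \<Rightarrow> nat \<Rightarrow> nat \<Rightarrow> 'a" where
  "qb Q 0 j = (if j = 0 then 1 else 0)"
| "qb Q (Suc n) 0 = 1"
| "qb Q (Suc n) (Suc j) = qb Q n j + Q ^ Suc j * qb Q n (Suc j)"

fun tri :: "nat \<Rightarrow> nat" where
  "tri 0 = 0"
| "tri (Suc j) = tri j + j"

lemma qb_zero: "n < j \<Longrightarrow> qb Q n j = 0"
proof (induction n arbitrary: j)
  case 0 thus ?case by simp
next
  case (Suc n)
  then obtain i where "j = Suc i" by (cases j) auto
  thus ?case using Suc by simp
qed

lemma qb_0[simp]: "qb Q N 0 = 1" by (cases N) auto

lemma qbin:
  fixes x y Q :: "'a::comm_ring_1"
  shows "(\<Prod>k<N. y + x * Q ^ k) = (\<Sum>j\<le>N. qb Q N j * Q ^ tri j * x ^ j * y ^ (N - j))"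
proof (induction N arbitrary: x)
  case 0 thus ?case by simp
next
  case (Suc N)
  define S where "S = (\<Sum>j\<le>N. qb Q N j * Q ^ tri j * (x * Q) ^ j * y ^ (N - j))"
  have "(\<Prod>k<Suc N. y + x * Q ^ k) = (y + x) * (\<Prod>k<N. y + (x * Q) * Q ^ k)"
    unfolding prod.lessThan_Suc_shift by (simp add: mult.assoc del: prod.lessThan_Suc)
  also have "\<dots> = (y + x) * S" using Suc[of "x * Q"] by (simp add: S_def)
  also have "\<dots> = y * S + x * S" by (simp add: algebra_simps)
  finally have L: "(\<Prod>k<Suc N. y + x * Q ^ k) = y * S + x * S" .
  define h where "h j = qb Q N j * Q ^ tri j * Q ^ j * x ^ j * y ^ (Suc N - j)" for j
  have yS: "y * S = (\<Sum>j\<le>N. h j)"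
    unfolding S_def sum_distrib_left
    by (intro sum.cong refl) (auto simp: h_def power_mult_distrib Suc_diff_le algebra_simps)
  also have "\<dots> = (\<Sum>j\<le>Suc N. h j)" by (simp add: h_def qb_zero)
  also have "\<dots> = h 0 + (\<Sum>j\<le>N. h (Suc j))" by (rule sum.atMost_Suc_shift)
  also have "\<dots> = y ^ Suc N + (\<Sum>j\<le>N. Q ^ Suc j * qb Q N (Suc j) * Q ^ tri (Suc j) * x ^ Suc j * y ^ (N - j))"
    by (simp add: h_def algebra_simps power_add)
  finally have yS': "y * S = \<dots>" .
  have xS: "x * S = (\<Sum>j\<le>N. qb Q N j * Q ^ tri (Suc j) * x ^ Suc j * y ^ (N - j))"
    unfolding S_def sum_distrib_left
    by (intro sum.cong refl) (simp add: power_mult_distrib power_add algebra_simps)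
  have "(\<Sum>j\<le>Suc N. qb Q (Suc N) j * Q ^ tri j * x ^ j * y ^ (Suc N - j))
      = y ^ Suc N + (\<Sum>j\<le>N. qb Q (Suc N) (Suc j) * Q ^ tri (Suc j) * x ^ Suc j * y ^ (N - j))"
    by (simp only: sum.atMost_Suc_shift) simp
  also have "\<dots> = y ^ Suc N + ((\<Sum>j\<le>N. Q ^ Suc j * qb Q N (Suc j) * Q ^ tri (Suc j) * x ^ Suc j * y ^ (N - j))
       + (\<Sum>j\<le>N. qb Q N j * Q ^ tri (Suc j) * x ^ Suc j * y ^ (N - j)))"
    by (simp add: sum.distrib[symmetric] algebra_simps del: tri.simps)
  also have "\<dots> = y * S + x * S" using yS' xS by simp
  finally show ?case using L by simp
qed

lemma qb_fact:
  fixes Q :: "'a::comm_ring_1"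
  defines "P \<equiv> \<lambda>n. \<Prod>i<n. 1 - Q ^ Suc i"
  shows "j \<le> n \<Longrightarrow> qb Q n j * P j * P (n - j) = P n"
proof (induction n arbitrary: j)
  case 0 thus ?case by (simp add: P_def)
next
  case (Suc n)
  show ?case
  proof (cases j)
    case 0 thus ?thesis by (simp add: P_def)
  next
    case (Suc i)
    hence i: "i \<le> n" using Suc.prems by simp
    have Pi: "P (Suc i) = P i * (1 - Q ^ Suc i)" by (simp add: P_def)
    have "qb Q n i * P (Suc i) * P (n - i) = (qb Q n i * P i * P (n - i)) * (1 - Q ^ Suc i)"
      unfolding Pi by (simp only: ac_simps)
    hence A: "qb Q n i * P (Suc i) * P (n - i) = P n * (1 - Q ^ Suc i)"
      by (simp only: Suc.IH[OF i])
    have B: "Q ^ Suc i * qb Q n (Suc i) * P (Suc i) * P (n - i) = Q ^ Suc i * P n - Q ^ Suc n * P n"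
    proof (cases "i = n")
      case True thus ?thesis by (simp add: qb_zero)
    next
      case False
      hence i2: "Suc i \<le> n" using i by simp
      have "n - i = Suc (n - Suc i)" using i2 by simp
      hence PP: "P (n - i) = P (n - Suc i) * (1 - Q ^ (n - i))" by (simp add: P_def)
      have "Q ^ Suc i * qb Q n (Suc i) * P (Suc i) * P (n - i)
           = Q ^ Suc i * (qb Q n (Suc i) * P (Suc i) * P (n - Suc i)) * (1 - Q ^ (n - i))"
        unfolding PP by (simp only: ac_simps)
      also have "\<dots> = Q ^ Suc i * P n * (1 - Q ^ (n - i))" using Suc.IH[OF i2] by simp
      also have "\<dots> = Q ^ Suc i * P n - Q ^ (Suc i + (n - i)) * P n"
        by (simp add: algebra_simps power_add)
      also have "Suc i + (n - i) = Suc n" using i by simp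
      finally show ?thesis .
    qed
    have "qb Q (Suc n) j * P j * P (Suc n - j)
        = qb Q n i * P (Suc i) * P (n - i) + Q ^ Suc i * qb Q n (Suc i) * P (Suc i) * P (n - i)"
      using Suc by (simp add: algebra_simps)
    also have "\<dots> = P n * (1 - Q ^ Suc n)" unfolding A B by (simp add: algebra_simps)
    also have "\<dots> = P (Suc n)" by (simp add: P_def)
    finally show ?thesis .
  qed
qed


lemma one_minus_X_eqm: "k \<ge> 1 \<Longrightarrow> eqm (Suc n) (1 - fps_X ^ (k * Suc n) :: real fps) 1"
  unfolding eqm_def
proof (intro allI impI)
  fix i assume k: "k \<ge> 1" and i: "i < Suc n"
  have "Suc n \<le> k * Suc n" using mult_le_mono1[OF k, of "Suc n"] by simp
  hence "i \<noteq> k * Suc n" using i by linarith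
  thus "fps_nth (1 - fps_X ^ (k * Suc n) :: real fps) i = fps_nth 1 i" by simp
qed

lemma f_fps_eqm:
  assumes "k \<ge> 1"
  shows "eqm (Suc n) (f_fps k) (\<Prod>i<n. 1 - fps_X ^ (k * Suc i))" "fps_nth (f_fps k) 0 = 1"
  unfolding f_fps_def using prodinf_eqm[of "\<lambda>i. 1 - fps_X ^ (k * Suc i)", OF one_minus_X_eqm[OF assms]]
  by auto

lemma f_fps_0: "k \<ge> 1 \<Longrightarrow> fps_nth (f_fps k) 0 = 1"
  using f_fps_eqm by blast

lemma compose_X_power_nth:
  assumes "n < j"
  shows "fps_nth ((A :: real fps) oo fps_X ^ j) n = (if n = 0 then fps_nth A 0 else 0)"
proof -
  have "fps_nth (A oo fps_X ^ j) n = (\<Sum>i=0..n. fps_nth A i * (if n = j * i then 1 else 0))"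
    by (simp add: fps_compose_nth power_mult[symmetric])
  also have "\<dots> = (\<Sum>i=0..n. if i = 0 then (if n = 0 then fps_nth A 0 else 0) else 0)"
  proof (intro sum.cong refl)
    fix i assume "i \<in> {0..n}"
    show "fps_nth A i * (if n = j * i then 1 else 0) = (if i = 0 then (if n = 0 then fps_nth A 0 else 0) else 0)"
    proof (cases "i = 0")
      case False
      hence "j * i \<ge> j" by simp
      thus ?thesis using assms False by auto
    qed auto
  qed
  also have "\<dots> = (if n = 0 then fps_nth A 0 else 0)" by simp
  finally show ?thesis .
qed

lemma compose_X_power_eqm:
  assumes "fps_nth (A :: real fps) 0 = 1"
  shows "eqm j (A oo fps_X ^ j) 1"
  unfolding eqm_def using compose_X_power_nth assms by simp

lemma X_power_compose: "j \<ge> 1 \<Longrightarrow> (fps_X ^ a :: real fps) oo fps_X ^ j = fps_X ^ (a * j)"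
  by (simp add: fps_compose_power[symmetric] fps_X_fps_compose_startby0 power_mult[symmetric] mult.commute)

lemma f_fps_compose:
  assumes k: "k \<ge> 1" and j: "j \<ge> 1"
  shows "f_fps k oo fps_X ^ j = f_fps (k * j)"
proof (rule eqm_eq)
  fix m
  have X0: "fps_nth (fps_X ^ j :: real fps) 0 = 0" using j by simp
  have kj: "k * j \<ge> 1" using k j by simp
  have "eqm (Suc m) (f_fps k oo fps_X ^ j) ((\<Prod>i<m. 1 - fps_X ^ (k * Suc i)) oo fps_X ^ j)"
    by (rule eqm_compose[OF f_fps_eqm(1)[OF k]])
  also have "(\<Prod>i<m. 1 - fps_X ^ (k * Suc i)) oo (fps_X ^ j :: real fps) = (\<Prod>i<m. 1 - fps_X ^ (k * j * Suc i))"
    apply (subst fps_compose_prod_distrib[OF X0])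
    apply (intro prod.cong refl)
    apply (simp add: fps_compose_sub_distrib X_power_compose[OF j] mult.commute mult.left_commute)
    done
  finally have "eqm (Suc m) (f_fps k oo fps_X ^ j) (\<Prod>i<m. 1 - fps_X ^ (k * j * Suc i))" .
  hence "eqm (Suc m) (f_fps k oo fps_X ^ j) (f_fps (k * j))"
    using eqm_trans eqm_sym f_fps_eqm(1)[OF kj] by blast
  thus "eqm m (f_fps k oo fps_X ^ j) (f_fps (k * j))" by (rule eqm_mono) simp
qed

lemma phi_0: "fps_nth phi_fps 0 = 1"
proof -
  have "{k::int. k ^ 2 = 0} = {0}" by auto
  thus ?thesis by (simp add: phi_fps_def)
qed


lemma prod_add_split: "(\<Prod>k<m+(n::nat). f k) = (\<Prod>k<m. f k) * (\<Prod>k<n. f (m + k))"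
  by (induction n) (auto simp: mult.assoc)

lemma prod_reflect: "(\<Prod>k<n. f (n - Suc k)) = (\<Prod>k<n. f k)"
proof (induction n arbitrary: f)
  case 0 thus ?case by simp
next
  case (Suc n)
  have "(\<Prod>k<Suc n. f (Suc n - Suc k)) = f n * (\<Prod>k<n. f (n - Suc k))"
    by (simp add: prod.lessThan_Suc_shift del: prod.lessThan_Suc)
  also have "\<dots> = f n * (\<Prod>k<n. f k)" using Suc by simp
  finally show ?case by (simp add: mult.commute)
qed

lemma prod_even_odd: "(\<Prod>k<2*(n::nat). f k) = (\<Prod>k<n. f (2*k) * f (2*k+1))"
  by (induction n) (auto simp: mult.assoc)

lemma sum_double: "(\<Sum>k<M. 2 * k) = M * (M - 1::nat)"
proof (induction M)
  case (Suc M) thus ?case by (cases M) (auto simp: algebra_simps)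
qed simp

lemma tri_double: "2 * tri j + j = j * j"
  by (induction j) (auto simp: algebra_simps)

definition Ob :: "nat \<Rightarrow> real fps" where "Ob n = (\<Prod>k<n. 1 + fps_X ^ (2*k+1))"

definition dd :: "nat \<Rightarrow> nat \<Rightarrow> nat" where "dd M j = nat \<bar>int j - int M\<bar>"

lemma exp_identity:
  assumes "M \<ge> 1" "j \<le> 2*M"
  shows "2 * tri j + (2*M-1)*(2*M-j) = M*(M-1) + (2*M-1)*M + dd M j ^ 2"
proof -
  have t: "int (2 * tri j) = int j * int j - int j" using tri_double[of j]
    by (metis add_diff_cancel_right' of_nat_diff le_add2 of_nat_mult)
  have d: "int (dd M j ^ 2) = (int j - int M)^2" by (simp add: dd_def)
  have "int (2 * tri j + (2*M-1)*(2*M-j)) = int j * int j - int j + (2*int M - 1)*(2*int M - int j)"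
    using assms t by (simp add: of_nat_diff)
  also have "\<dots> = int M * (int M - 1) + (2*int M - 1)*int M + (int j - int M)^2"
    by (simp add: algebra_simps power2_eq_square)
  also have "\<dots> = int (M*(M-1) + (2*M-1)*M + dd M j ^ 2)"
    using assms d by (simp add: of_nat_diff)
  finally show ?thesis by linarith
qed

lemma lhs_product:
  assumes "M \<ge> 1"
  shows "(\<Prod>k<2*M. fps_X ^ (2*M-1) + 1 * (fps_X^2) ^ k) = fps_X ^ (M*(M-1) + (2*M-1)*M) * Ob M ^ 2"
proof -
  let ?f = "\<lambda>k. fps_X ^ (2*M-1) + 1 * (fps_X^2) ^ k :: real fps"
  have "(\<Prod>k<2*M. ?f k) = (\<Prod>k<M. ?f k) * (\<Prod>k<M. ?f (M + k))"
    using prod_add_split[of ?f M M] by (simp add: mult_2)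
  moreover have "(\<Prod>k<M. ?f k) = fps_X ^ (M*(M-1)) * Ob M"
  proof -
    have "(\<Prod>k<M. ?f k) = (\<Prod>k<M. fps_X ^ (2*k) * (1 + fps_X ^ (2*(M - Suc k)+1)))"
    proof (intro prod.cong refl)
      fix k assume "k \<in> {..<M}"
      hence "2*M-1 = 2*k + (2*(M - Suc k)+1)" by auto
      thus "?f k = fps_X ^ (2*k) * (1 + fps_X ^ (2*(M - Suc k)+1))"
        by (simp only: power_add power_mult distrib_left mult_1_right mult_1_left add.commute)
    qed
    also have "\<dots> = (\<Prod>k<M. fps_X ^ (2*k)) * (\<Prod>k<M. 1 + fps_X ^ (2*(M - Suc k)+1))"
      by (rule prod.distrib)
    also have "(\<Prod>k<M. fps_X ^ (2*k)) = (fps_X ^ (\<Sum>k<M. 2*k) :: real fps)"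
      by (simp add: power_sum)
    also have "(\<Prod>k<M. 1 + fps_X ^ (2*(M - Suc k)+1)) = Ob M"
      unfolding Ob_def using prod_reflect[of "\<lambda>k. 1 + fps_X ^ (2*k+1)" M] by simp
    finally show ?thesis by (simp add: sum_double)
  qed
  moreover have "(\<Prod>k<M. ?f (M + k)) = fps_X ^ ((2*M-1)*M) * Ob M"
  proof -
    have "(\<Prod>k<M. ?f (M + k)) = (\<Prod>k<M. fps_X ^ (2*M-1) * (1 + fps_X ^ (2*k+1)))"
    proof (intro prod.cong refl)
      fix k assume "k \<in> {..<M}"
      have h: "2 * (M + k) = (2*M-1) + (2*k+1)" using assms by simp
      show "?f (M + k) = fps_X ^ (2*M-1) * (1 + fps_X ^ (2*k+1))"
      proof -
        have "(fps_X^2)^(M+k) = (fps_X^(2*(M+k)) :: real fps)" by (simp only: power_mult)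
        also have "\<dots> = fps_X ^ (2*M-1) * fps_X ^ (2*k+1)" by (simp only: h power_add)
        finally show ?thesis by (simp add: distrib_left)
      qed
    qed
    also have "\<dots> = fps_X ^ ((2*M-1)*M) * Ob M"
      by (simp add: prod.distrib Ob_def power_mult)
    finally show ?thesis .
  qed
  ultimately have "(\<Prod>k<2*M. ?f k) = fps_X ^ (M*(M-1)) * Ob M * (fps_X ^ ((2*M-1)*M) * Ob M)"
    by (simp only:)
  also have "\<dots> = fps_X ^ (M*(M-1) + (2*M-1)*M) * Ob M ^ 2"
    by (simp only: power_add power2_eq_square ac_simps)
  finally show ?thesis .
qed

lemma term_eq:
  assumes "M \<ge> 1" "j \<le> 2*M"
  shows "qb (fps_X^2 :: real fps) (2*M) j * (fps_X^2) ^ tri j * 1 ^ j * (fps_X ^ (2*M-1)) ^ (2*M - j)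
        = fps_X ^ (M*(M-1) + (2*M-1)*M) * (qb (fps_X^2) (2*M) j * fps_X ^ (dd M j ^ 2))"
proof -
  let ?a = "M*(M-1) + (2*M-1)*M"
    have e: "2 * tri j + (2*M-1)*(2*M-j) = ?a + dd M j ^ 2" using exp_identity[OF assms] by auto
    have "(fps_X^2) ^ tri j * 1 ^ j * (fps_X ^ (2*M-1)) ^ (2*M - j) = (fps_X ^ (2 * tri j + (2*M-1)*(2*M-j)) :: real fps)"
      by (simp add: power_add power_mult)
    also have "\<dots> = fps_X ^ ?a * fps_X ^ (dd M j ^ 2)" by (simp only: e power_add)
    finally have E: "(fps_X^2) ^ tri j * 1 ^ j * (fps_X ^ (2*M-1)) ^ (2*M - j) = (fps_X ^ ?a * fps_X ^ (dd M j ^ 2) :: real fps)" .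
    have "qb (fps_X^2 :: real fps) (2*M) j * (fps_X^2) ^ tri j * 1 ^ j * (fps_X ^ (2*M-1)) ^ (2*M - j)
        = qb (fps_X^2) (2*M) j * ((fps_X^2) ^ tri j * 1 ^ j * (fps_X ^ (2*M-1)) ^ (2*M - j))"
      by (simp only: mult.assoc)
    also have "\<dots> = qb (fps_X^2) (2*M) j * (fps_X ^ ?a * fps_X ^ (dd M j ^ 2))" using E by (rule arg_cong)
    also have "\<dots> = fps_X ^ ?a * (qb (fps_X^2) (2*M) j * fps_X ^ (dd M j ^ 2))" by (simp only: ac_simps)
    finally show ?thesis .
qed

lemma Ob_sq:
  assumes "M \<ge> 1"
  shows "Ob M ^ 2 = (\<Sum>j\<le>2*M. qb (fps_X^2) (2*M) j * fps_X ^ (dd M j ^ 2))"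
proof -
  let ?a = "M*(M-1) + (2*M-1)*M"
  have "fps_X ^ ?a * Ob M ^ 2 = (\<Sum>j\<le>2*M. qb (fps_X^2) (2*M) j * (fps_X^2) ^ tri j * 1 ^ j * (fps_X ^ (2*M-1)) ^ (2*M - j))"
    using lhs_product[OF assms] qbin[of "fps_X ^ (2*M-1)" "1::real fps" "fps_X^2" "2*M"] by (simp only:)
  also have "\<dots> = (\<Sum>j\<le>2*M. fps_X ^ ?a * (qb (fps_X^2) (2*M) j * fps_X ^ (dd M j ^ 2)))"
    by (intro sum.cong refl term_eq[OF assms]) auto
  also have "\<dots> = fps_X ^ ?a * (\<Sum>j\<le>2*M. qb (fps_X^2) (2*M) j * fps_X ^ (dd M j ^ 2))"
    by (simp add: sum_distrib_left)
  finally show ?thesis by simp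
qed


definition Bp :: "nat \<Rightarrow> real fps" where "Bp n = (\<Prod>i<n. 1 - (fps_X^2) ^ Suc i)"

lemma Bp_alt: "Bp n = (\<Prod>i<n. 1 - fps_X ^ (2 * Suc i))"
  unfolding Bp_def by (simp only: power_mult)

lemma Bp_factor_eqm: "n \<le> i \<Longrightarrow> eqm (2*n+2) (1 - (fps_X^2) ^ Suc i :: real fps) 1"
  unfolding eqm_def power_mult[symmetric] by auto

lemma Bp_eqm: "n \<le> n' \<Longrightarrow> eqm (2*n+2) (Bp n') (Bp n)"
proof (induction n' rule: dec_induct)
  case base thus ?case by simp
next
  case (step m)
  have "eqm (2*n+2) (Bp m * (1 - (fps_X^2) ^ Suc m)) (Bp n * 1)"
    using step by (intro eqm_mult Bp_factor_eqm) auto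
  thus ?case by (simp add: Bp_def)
qed

lemma Bp_0: "fps_nth (Bp n) 0 = 1"
  using Bp_eqm[of 0 n] by (simp add: eqm_def Bp_def)

lemma qb_Bp_eqm:
  assumes j: "j \<le> 2*M"
  shows "eqm (2 * min j (2*M-j) + 2) (qb (fps_X^2) (2*M) j * Bp M) 1"
proof -
  define r where "r = min j (2*M-j)"
  define e where "e = 2*r+2"
  have r: "r \<le> M" "r \<le> j" "r \<le> 2*M-j" "r \<le> 2*M" using j by (auto simp: r_def)
  have E1: "eqm e (Bp M) (Bp r)" "eqm e (Bp j) (Bp r)" "eqm e (Bp (2*M-j)) (Bp r)" "eqm e (Bp (2*M)) (Bp r)"
    unfolding e_def by (rule Bp_eqm, use r in simp)+
  have "eqm e (qb (fps_X^2) (2*M) j * Bp M * Bp M) (qb (fps_X^2) (2*M) j * Bp j * Bp (2*M-j))"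
    by (intro eqm_mult eqm_refl) (meson E1 eqm_sym eqm_trans)+
  also have "qb (fps_X^2) (2*M) j * Bp j * Bp (2*M-j) = Bp (2*M)"
    unfolding Bp_def using qb_fact[of j "2*M" "fps_X^2 :: real fps"] j by simp
  finally have "eqm e (qb (fps_X^2) (2*M) j * Bp M * Bp M) (1 * Bp M)"
    by (simp) (meson E1 eqm_sym eqm_trans)
  hence "eqm e (qb (fps_X^2) (2*M) j * Bp M) 1"
    by (rule eqm_cancel) (simp add: Bp_0)
  thus ?thesis by (simp add: e_def r_def)
qed

lemma min_dd: "j \<le> 2*M \<Longrightarrow> min j (2*M-j) = M - dd M j"
  unfolding dd_def by (cases "j \<le> M") auto

lemma card_sq:
  assumes "k \<le> M"
  shows "card {j\<in>{..2*M}. dd M j ^ 2 = k} = card {z::int. z^2 = int k}"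
proof -
  let ?h = "\<lambda>j. int j - int M"
  have inj: "inj_on ?h {j\<in>{..2*M}. dd M j ^ 2 = k}" by (auto simp: inj_on_def)
  have img: "?h ` {j\<in>{..2*M}. dd M j ^ 2 = k} = {z::int. z^2 = int k}"
  proof (intro equalityI subsetI)
    fix z assume "z \<in> ?h ` {j\<in>{..2*M}. dd M j ^ 2 = k}"
    then obtain j where "dd M j ^ 2 = k" "z = ?h j" by auto
    hence "int k = int (dd M j ^ 2)" by simp
    also have "\<dots> = z^2" using \<open>z = ?h j\<close> by (simp add: dd_def)
    finally show "z \<in> {z::int. z^2 = int k}" by simp
  next
    fix z :: int assume "z \<in> {z::int. z^2 = int k}"
    hence zk: "z^2 = int k" by simp
    have "\<bar>z\<bar> \<le> z^2"
    proof (cases "z = 0")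
      case False
      hence "1 \<le> \<bar>z\<bar>" by simp
      hence "\<bar>z\<bar> * 1 \<le> \<bar>z\<bar> * \<bar>z\<bar>" by (intro mult_left_mono) auto
      thus ?thesis by (simp add: power2_eq_square abs_mult[symmetric])
    qed simp
    hence zM: "\<bar>z\<bar> \<le> int M" using zk assms by linarith
    define j where "j = nat (z + int M)"
    have j1: "int j = z + int M" using zM by (simp add: j_def)
    have "j \<le> 2*M" using zM j1 by linarith
    moreover have "int (dd M j ^ 2) = int k" using j1 zk by (simp add: dd_def)
    hence "dd M j ^ 2 = k" by (simp only: of_nat_eq_iff)
    moreover have "z = ?h j" using j1 by simp
    ultimately show "z \<in> ?h ` {j\<in>{..2*M}. dd M j ^ 2 = k}" by blast
  qed
  show ?thesis using card_image[OF inj] img by simp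
qed

lemma BOb_coeff:
  assumes M: "M \<ge> 1" and k: "k \<le> M"
  shows "fps_nth (Bp M * Ob M ^ 2) k = real (card {z::int. z^2 = int k})"
proof -
  have "Bp M * Ob M ^ 2 = (\<Sum>j\<le>2*M. (qb (fps_X^2) (2*M) j * Bp M) * fps_X ^ (dd M j ^ 2))"
    unfolding Ob_sq[OF M] sum_distrib_left by (intro sum.cong refl) (simp only: ac_simps)
  hence "fps_nth (Bp M * Ob M ^ 2) k = (\<Sum>j\<le>2*M. fps_nth ((qb (fps_X^2) (2*M) j * Bp M) * fps_X ^ (dd M j ^ 2)) k)"
    by (simp add: fps_sum_nth)
  also have "\<dots> = (\<Sum>j\<le>2*M. if dd M j ^ 2 = k then 1 else 0)"
  proof (intro sum.cong refl)
    fix j assume "j \<in> {..2*M}"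
    hence j: "j \<le> 2*M" by simp
    let ?d = "dd M j"
    show "fps_nth ((qb (fps_X^2) (2*M) j * Bp M) * fps_X ^ (?d ^ 2)) k = (if ?d ^ 2 = k then 1 else 0)"
    proof (cases "k < ?d ^ 2")
      case True thus ?thesis by (simp add: fps_X_power_mult_right_nth)
    next
      case False
      have dd2: "?d \<le> ?d ^ 2" by (cases ?d) (auto simp: power2_eq_square)
      have "k - ?d^2 < 2 * min j (2*M-j) + 2"
        using min_dd[OF j] False dd2 k by linarith
      hence "fps_nth (qb (fps_X^2) (2*M) j * Bp M) (k - ?d^2) = fps_nth 1 (k - ?d^2)"
        using qb_Bp_eqm[OF j] by (simp add: eqm_def)
      thus ?thesis using False by (simp add: fps_X_power_mult_right_nth)
    qed
  qed
  also have "\<dots> = real (card {j\<in>{..2*M}. dd M j ^ 2 = k})"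
    by (simp add: sum.If_cases Int_def conj_commute)
  also have "\<dots> = real (card {z::int. z^2 = int k})" using card_sq[OF k] by simp
  finally show ?thesis .
qed

definition Oinf :: "real fps" where "Oinf = (\<Prod>k. 1 + fps_X ^ (2*k+1))"

lemma Oinf_eqm: "eqm (Suc n) Oinf (Ob n)" "fps_nth Oinf 0 = 1"
proof -
  have h: "eqm (Suc i) ((\<lambda>k. 1 + fps_X ^ (2*k+1)) i) 1" for i
    unfolding eqm_def by auto
  show "eqm (Suc n) Oinf (Ob n)" unfolding Oinf_def Ob_def by (rule prodinf_eqm(1)[OF h])
  show "fps_nth Oinf 0 = 1" unfolding Oinf_def by (rule prodinf_eqm(2)[OF h])
qed

lemma phi_factor: "phi_fps = f_fps 2 * Oinf ^ 2"
proof (rule fps_ext)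
  fix k
  have "eqm (Suc (Suc k)) (f_fps 2 * Oinf ^ 2) (Bp (Suc k) * Ob (Suc k) ^ 2)"
    using f_fps_eqm(1)[of 2 "Suc k"] Oinf_eqm(1)[of "Suc k"]
    by (intro eqm_mult eqm_power) (auto simp: Bp_alt)
  hence "fps_nth (f_fps 2 * Oinf ^ 2) k = fps_nth (Bp (Suc k) * Ob (Suc k) ^ 2) k"
    by (simp add: eqm_def)
  also have "\<dots> = real (card {z::int. z^2 = int k})" by (rule BOb_coeff) auto
  finally show "fps_nth phi_fps k = fps_nth (f_fps 2 * Oinf ^ 2) k"
    by (simp add: phi_fps_def)
qed


lemma ring_fact: "(1 + a) * ((1 - a) * (1 - b)) * (1 - c) = ((1 - a * a) * (1 - c)) * (1 - (b::'a::comm_ring_1))"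
  by (simp add: algebra_simps)

lemma finite_id:
  "Ob N * (\<Prod>k<2*N. 1 - fps_X ^ (1 * Suc k)) * (\<Prod>k<N. 1 - fps_X ^ (4 * Suc k))
   = (\<Prod>k<2*N. 1 - fps_X ^ (2 * Suc k)) * (\<Prod>k<N. 1 - (fps_X ^ (2 * Suc k) :: real fps))"
proof -
  have "Ob N * (\<Prod>k<2*N. 1 - fps_X ^ (1 * Suc k)) * (\<Prod>k<N. 1 - fps_X ^ (4 * Suc k))
      = (\<Prod>k<N. (1 + fps_X ^ (2*k+1)) * ((1 - fps_X ^ (1 * Suc (2*k))) * (1 - fps_X ^ (1 * Suc (2*k+1)))) * (1 - fps_X ^ (4 * Suc k)))"
    unfolding Ob_def prod_even_odd prod.distrib ..
  also have "\<dots> = (\<Prod>k<N. ((1 - fps_X ^ (2 * Suc (2*k))) * (1 - fps_X ^ (2 * Suc (2*k+1)))) * (1 - (fps_X ^ (2 * Suc k) :: real fps)))"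
  proof (intro prod.cong refl)
    fix k
    have e1: "fps_X ^ (1 * Suc (2*k)) = (fps_X ^ (2*k+1) :: real fps)" by simp
    have e2: "fps_X ^ (1 * Suc (2*k+1)) = (fps_X ^ (2 * Suc k) :: real fps)" by simp
    have e3: "fps_X ^ (2 * Suc (2*k)) = (fps_X ^ (2*k+1) * fps_X ^ (2*k+1) :: real fps)"
      by (simp only: power_add[symmetric]) simp
    have "2 * Suc (2*k+1) = 4 * Suc k" by simp
    hence e4: "fps_X ^ (2 * Suc (2*k+1)) = (fps_X ^ (4 * Suc k) :: real fps)" by (simp only:)
    show "(1 + fps_X ^ (2*k+1)) * ((1 - fps_X ^ (1 * Suc (2*k))) * (1 - fps_X ^ (1 * Suc (2*k+1)))) * (1 - fps_X ^ (4 * Suc k))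
        = ((1 - fps_X ^ (2 * Suc (2*k))) * (1 - fps_X ^ (2 * Suc (2*k+1)))) * (1 - (fps_X ^ (2 * Suc k) :: real fps))"
      unfolding e1 e2 e3 e4 by (rule ring_fact)
  qed
  also have "\<dots> = (\<Prod>k<2*N. 1 - fps_X ^ (2 * Suc k)) * (\<Prod>k<N. 1 - (fps_X ^ (2 * Suc k) :: real fps))"
    unfolding prod_even_odd prod.distrib ..
  finally show ?thesis .
qed

lemma Oinf_f: "Oinf * f_fps 1 * f_fps 4 = f_fps 2 * f_fps 2"
proof (rule eqm_eq)
  fix m :: nat
  define N where "N = m"
  have a: "eqm (Suc N) (f_fps 1) (\<Prod>k<2*N. 1 - fps_X ^ (1 * Suc k))"
    by (rule eqm_mono[OF f_fps_eqm(1)]) auto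
  have b: "eqm (Suc N) (f_fps 2) (\<Prod>k<2*N. 1 - fps_X ^ (2 * Suc k))"
    by (rule eqm_mono[OF f_fps_eqm(1)]) auto
  have "eqm (Suc N) (Oinf * f_fps 1 * f_fps 4)
     (Ob N * (\<Prod>k<2*N. 1 - fps_X ^ (1 * Suc k)) * (\<Prod>k<N. 1 - fps_X ^ (4 * Suc k)))"
    by (intro eqm_mult Oinf_eqm a f_fps_eqm) auto
  also have "(Ob N * (\<Prod>k<2*N. 1 - fps_X ^ (1 * Suc k)) * (\<Prod>k<N. 1 - fps_X ^ (4 * Suc k)))
     = (\<Prod>k<2*N. 1 - fps_X ^ (2 * Suc k)) * (\<Prod>k<N. 1 - (fps_X ^ (2 * Suc k) :: real fps))"
    by (rule finite_id)
  finally have "eqm (Suc N) (Oinf * f_fps 1 * f_fps 4)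
     ((\<Prod>k<2*N. 1 - fps_X ^ (2 * Suc k)) * (\<Prod>k<N. 1 - (fps_X ^ (2 * Suc k) :: real fps)))" .
  moreover have "eqm (Suc N) (f_fps 2 * f_fps 2)
     ((\<Prod>k<2*N. 1 - fps_X ^ (2 * Suc k)) * (\<Prod>k<N. 1 - (fps_X ^ (2 * Suc k) :: real fps)))"
    by (intro eqm_mult b f_fps_eqm) auto
  ultimately have "eqm (Suc N) (Oinf * f_fps 1 * f_fps 4) (f_fps 2 * f_fps 2)"
    using eqm_sym eqm_trans by blast
  thus "eqm m (Oinf * f_fps 1 * f_fps 4) (f_fps 2 * f_fps 2)"
    by (rule eqm_mono) (simp add: N_def)
qed

lemma phi_identity: "phi_fps * f_fps 1 ^ 2 * f_fps 4 ^ 2 = f_fps 2 ^ 5"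
proof -
  have "phi_fps * f_fps 1 ^ 2 * f_fps 4 ^ 2 = f_fps 2 * (Oinf * f_fps 1 * f_fps 4) ^ 2"
    by (simp add: phi_factor power2_eq_square ac_simps)
  also have "\<dots> = f_fps 2 ^ 5" unfolding Oinf_f by (simp add: power2_eq_square numeral_eq_Suc ac_simps)
  finally show ?thesis .
qed


lemma tele_alg:
  fixes p a b c ia ib ic :: "'a::comm_ring_1"
  assumes "a * ia = 1" "b * ib = 1" "c * ic = 1" "p * a^2 * c^2 = b^5"
  shows "p * (c * ib^2)^2 = b * ia^2"
proof -
  have "p * (c * ib^2)^2 = p * (c * ib^2)^2 * (a * ia)^2" using assms by simp
  also have "\<dots> = (p * a^2 * c^2) * ia^2 * (ib^2)^2" by (simp only: power_mult_distrib ac_simps)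
  also have "\<dots> = b * (b * ib)^4 * ia^2"
    using assms(4) by (simp add: power_mult_distrib power_mult[symmetric] numeral_eq_Suc ac_simps)
  also have "\<dots> = b * ia^2" using assms by simp
  finally show ?thesis .
qed

lemma final_alg:
  fixes p a b d ia ib iv :: "'a::comm_ring_1"
  assumes a: "a * ia = 1" and b: "b * ib = 1" and d: "d * iv = 1" and p: "p * a^2 * d^2 = b^5"
  shows "d^(m+1) * (ia^2 * ib^(2*m+1)) = p * (d * ib^2)^(m+3)"
proof -
  have "p = p * (a*ia)^2 * (d*iv)^2" using a d by simp
  also have "\<dots> = (p * a^2 * d^2) * ia^2 * iv^2" by (simp only: power_mult_distrib ac_simps)
  also have "\<dots> = b^5 * ia^2 * iv^2" using p by simp
  finally have p_eq: "p = b^5 * ia^2 * iv^2" .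
  have "(d * ib^2)^(m+3) = d^(m+1) * d^2 * (ib^(2*m+1) * ib^5)"
  proof -
    have "m+3 = (m+1)+2" by simp
    hence e1: "d^(m+3) = d^(m+1) * d^2" by (simp only: power_add)
    have e2: "(ib^2)^(m+3) = ib^(2*m+1) * ib^5" by (simp only: power_mult[symmetric] power_add[symmetric]) (simp add: add.commute)
    show ?thesis by (simp only: power_mult_distrib e1 e2)
  qed
  hence "p * (d * ib^2)^(m+3) = (b*ib)^5 * (d*iv)^2 * (d^(m+1) * (ia^2 * ib^(2*m+1)))"
    unfolding p_eq by (simp only: power_mult_distrib ac_simps)
  thus ?thesis using b d by simp
qed

lemma suc_le_pow: "Suc i \<le> 2 ^ Suc i"
proof -
  have "Suc i \<le> 2^i" by (rule Suc_leI[OF less_exp])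
  moreover have "(2::nat)^i \<le> 2^Suc i" by simp
  ultimately show ?thesis by linarith
qed

definition uu :: "nat \<Rightarrow> real fps" where "uu j = f_fps (2^j)"
definition phj :: "nat \<Rightarrow> real fps" where "phj j = phi_fps oo fps_X ^ (2^j)"
definition rr :: "nat \<Rightarrow> real fps" where "rr j = uu (Suc j) * inverse (uu j) ^ 2"

lemma uu_0: "fps_nth (uu j) 0 = 1" unfolding uu_def by (rule f_fps_0) simp

lemma uu_inv: "uu j * inverse (uu j) = 1"
  by (rule inverse_mult_eq_1') (simp add: uu_0)

lemma E_j: "phj j * uu j ^ 2 * uu (Suc (Suc j)) ^ 2 = uu (Suc j) ^ 5"
proof -
  have X0: "fps_nth (fps_X ^ (2^j) :: real fps) 0 = 0" by simp
  have j1: "(2::nat)^j \<ge> 1" by simp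
  have "(phi_fps * f_fps 1 ^ 2 * f_fps 4 ^ 2) oo fps_X ^ (2^j) = f_fps 2 ^ 5 oo fps_X ^ (2^j)"
    by (simp only: phi_identity)
  hence "(phi_fps oo fps_X ^ (2^j)) * (f_fps 1 oo fps_X ^ (2^j)) ^ 2 * (f_fps 4 oo fps_X ^ (2^j)) ^ 2
       = (f_fps 2 oo fps_X ^ (2^j)) ^ 5"
    by (simp only: fps_compose_mult_distrib[OF X0] fps_compose_power[OF X0])
  moreover have "f_fps 1 oo fps_X ^ (2^j) = uu j" using f_fps_compose[of 1 "2^j"] by (simp add: uu_def)
  moreover have "f_fps 2 oo fps_X ^ (2^j) = uu (Suc j)" using f_fps_compose[of 2 "2^j"] by (simp add: uu_def)
  moreover have "f_fps 4 oo fps_X ^ (2^j) = uu (Suc (Suc j))" using f_fps_compose[of 4 "2^j"] by (simp add: uu_def mult.commute)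
  ultimately show ?thesis by (simp add: phj_def)
qed

lemma rr_step: "phj j * rr (Suc j) ^ 2 = rr j"
  unfolding rr_def by (rule tele_alg[OF uu_inv uu_inv uu_inv E_j])

lemma tele:
  "(\<Prod>i<J. phj (Suc i) ^ (c * 2^i)) * rr (Suc J) ^ (c * 2^J) = rr 1 ^ c"
proof (induction J)
  case 0 thus ?case by simp
next
  case (Suc J)
  have "rr (Suc (Suc J)) ^ (c * 2^Suc J) = (rr (Suc (Suc J)) ^ 2) ^ (c * 2^J)"
    by (simp add: power_mult[symmetric] ac_simps)
  hence "phj (Suc J) ^ (c * 2^J) * rr (Suc (Suc J)) ^ (c * 2^Suc J) = rr (Suc J) ^ (c * 2^J)"
    using rr_step[of "Suc J"] by (simp add: power_mult_distrib[symmetric])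
  hence "(\<Prod>i<Suc J. phj (Suc i) ^ (c * 2^i)) * rr (Suc (Suc J)) ^ (c * 2^Suc J)
       = (\<Prod>i<J. phj (Suc i) ^ (c * 2^i)) * rr (Suc J) ^ (c * 2^J)"
    by (simp add: mult.assoc)
  thus ?case using Suc by simp
qed

lemma uu_eqm: "eqm (2^j) (uu j) 1"
proof -
  have "f_fps 1 oo fps_X ^ (2^j) = uu j" using f_fps_compose[of 1 "2^j"] by (simp add: uu_def)
  thus ?thesis using compose_X_power_eqm[of "f_fps 1" "2^j"] f_fps_0[of 1] by simp
qed

lemma rr_eqm: "eqm (2^Suc J) (rr (Suc J)) 1"
proof -
  have a: "eqm (2^Suc J) (uu (Suc (Suc J))) 1"
    by (rule eqm_mono[OF uu_eqm]) simp
  have b: "eqm (2^Suc J) (inverse (uu (Suc J))) (inverse 1)"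
    by (rule eqm_inverse[OF uu_eqm]) (simp add: uu_0)
  have "eqm (2^Suc J) (uu (Suc (Suc J)) * inverse (uu (Suc J)) ^ 2) (1 * (inverse 1) ^ 2)"
    by (intro eqm_mult eqm_power a b)
  thus ?thesis by (simp add: rr_def)
qed

lemma R_eq: "(\<Prod>i. (phi_fps oo fps_X ^ (2 ^ Suc i)) ^ (c * 2 ^ i)) = rr 1 ^ c"
proof (rule eqm_eq)
  fix m :: nat
  define g where "g i = (phi_fps oo fps_X ^ (2 ^ Suc i)) ^ (c * 2 ^ i)" for i
  have gi: "eqm (Suc i) (g i) 1" for i
  proof -
    have "Suc i \<le> 2 ^ Suc i" by (rule suc_le_pow)
    hence "eqm (Suc i) (phi_fps oo fps_X ^ (2 ^ Suc i)) 1"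
      using eqm_mono[OF compose_X_power_eqm[OF phi_0]] by blast
    hence "eqm (Suc i) ((phi_fps oo fps_X ^ (2 ^ Suc i)) ^ (c * 2 ^ i)) (1 ^ (c * 2^i))"
      by (rule eqm_power)
    thus ?thesis by (simp add: g_def)
  qed
  have A: "eqm (Suc m) (prodinf g) (\<Prod>i<m. g i)" by (rule prodinf_eqm(1)[OF gi])
  have "eqm (2^Suc m) ((\<Prod>i<m. g i) * rr (Suc m) ^ (c * 2^m)) ((\<Prod>i<m. g i) * 1 ^ (c * 2^m))"
    by (intro eqm_mult eqm_power eqm_refl rr_eqm)
  hence "eqm (2^Suc m) (rr 1 ^ c) (\<Prod>i<m. g i)"
    using tele[where J=m and c=c] by (simp add: g_def phj_def)
  hence "eqm (Suc m) (rr 1 ^ c) (\<Prod>i<m. g i)"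
    by (rule eqm_mono) (rule suc_le_pow)
  hence "eqm (Suc m) (prodinf g) (rr 1 ^ c)" using A eqm_sym eqm_trans by blast
  thus "eqm m (\<Prod>i. (phi_fps oo fps_X ^ (2 ^ Suc i)) ^ (c * 2 ^ i)) (rr 1 ^ c)"
    unfolding g_def by (rule eqm_mono) simp
qed


theorem lemma4p1:
  fixes c :: nat
  assumes "c \<ge> 3"
  shows "barF (c - 1) =
    phi_fps * (\<Prod>i. (fps_compose phi_fps (fps_X ^ (2 ^ Suc i))) ^ (c * 2 ^ i))"
proof -
  obtain m where m: "c = m + 3" using assms by (metis add.commute le_Suc_ex)
  have inv: "f_fps k * inverse (f_fps k) = 1" if "k \<ge> 1" for k
    by (rule inverse_mult_eq_1') (simp add: f_fps_0[OF that])
  have rr1: "rr 1 = f_fps 4 * inverse (f_fps 2) ^ 2" by (simp add: rr_def uu_def)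
  have "barF (c - 1) = f_fps 4 ^ (m + 1) * inverse (f_fps 1 ^ 2 * f_fps 2 ^ (2 * m + 1))"
    unfolding barF_def m by (simp add: numeral_eq_Suc)
  also have "\<dots> = f_fps 4 ^ (m + 1) * (inverse (f_fps 1) ^ 2 * inverse (f_fps 2) ^ (2 * m + 1))"
    by (simp only: fps_inverse_mult fps_inverse_power)
  also have "\<dots> = phi_fps * (f_fps 4 * inverse (f_fps 2) ^ 2) ^ (m + 3)"
    by (rule final_alg[OF inv inv inv phi_identity]) auto
  also have "\<dots> = phi_fps * (\<Prod>i. (fps_compose phi_fps (fps_X ^ (2 ^ Suc i))) ^ (c * 2 ^ i))"
    unfolding R_eq rr1 m ..
  finally show ?thesis .
qed

end
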